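(* Let $G$ be a graph on $[n]$ and $p$ in the Shearer region $\mathcal S$ of $G$. Then for all $A,B\subseteq[n]$, $q_A(p)\,q_B(p)\ge q_{A\cup B}(p)\,q_{A\cap B}(p)$.
   Context: Shearer notation: $\mathrm{Ind}$ is the family of independent sets of $G$ (including $\emptyset$); for $p\in\mathbb R^n$ and $I\subseteq[n]$, $p^I=\prod_{i\in I}p_i$. For $S\subseteq[n]$, $q_S(p)=\sum_{I\in\mathrm{Ind},\,S\subseteq I}(-1)^{|I\setminus S|}p^I$ (so $q_S=0$ if $S\notin\mathrm{Ind}$) and $\breve q_S(p)=\sum_{I\in\mathrm{Ind},\,I\subseteq S}(-1)^{|I|}p^I$. The Shearer region is $\mathcal S=\{p\in(0,1)^n:\breve q_S(p)>0\ \forall S\subseteq[n]\}$, which equals $\{p\in(0,1)^n: q_I(p)>0\ \forall I\in\mathrm{Ind}\}$. *)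

theory Defs
  imports Complex_Main
begin

text \<open>A (simple) graph on [n] = {1..n}: a symmetric irreflexive adjacency relation E.
  Only the restriction of E to {1..n} matters.\<close>
definition is_graph :: "nat \<Rightarrow> (nat \<Rightarrow> nat \<Rightarrow> bool) \<Rightarrow> bool" where
  "is_graph n E \<longleftrightarrow> (\<forall>i\<in>{1..n}. \<forall>j\<in>{1..n}. E i j \<longrightarrow> E j i) \<and> (\<forall>i\<in>{1..n}. \<not> E i i)"

definition Ind :: "nat \<Rightarrow> (nat \<Rightarrow> nat \<Rightarrow> bool) \<Rightarrow> nat set set" where
  "Ind n E = {I. I \<subseteq> {1..n} \<and> (\<forall>i\<in>I. \<forall>j\<in>I. \<not> E i j)}"

definition q :: "nat \<Rightarrow> (nat \<Rightarrow> nat \<Rightarrow> bool) \<Rightarrow> nat set \<Rightarrow> (nat \<Rightarrow> real) \<Rightarrow> real" where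
  "q n E S p = (\<Sum>I\<in>{I\<in>Ind n E. S \<subseteq> I}. (-1) ^ card (I - S) * (\<Prod>i\<in>I. p i))"

definition q_breve :: "nat \<Rightarrow> (nat \<Rightarrow> nat \<Rightarrow> bool) \<Rightarrow> nat set \<Rightarrow> (nat \<Rightarrow> real) \<Rightarrow> real" where
  "q_breve n E S p = (\<Sum>I\<in>{I\<in>Ind n E. I \<subseteq> S}. (-1) ^ card I * (\<Prod>i\<in>I. p i))"

text \<open>Shearer region: p in (0,1)^n with breve q_S(p) > 0 for all S \<subseteq> [n].
  Vectors p in R^n are functions nat => real; only values on {1..n} matter.\<close>
definition shearer_region :: "nat \<Rightarrow> (nat \<Rightarrow> nat \<Rightarrow> bool) \<Rightarrow> (nat \<Rightarrow> real) set" where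
  "shearer_region n E = {p. (\<forall>i\<in>{1..n}. 0 < p i \<and> p i < 1) \<and>
                            (\<forall>S. S \<subseteq> {1..n} \<longrightarrow> q_breve n E S p > 0)}"

end

theory Submission
  imports Defs
begin

definition indep :: "(nat \<Rightarrow> nat \<Rightarrow> bool) \<Rightarrow> nat set \<Rightarrow> bool" where
  "indep E I \<longleftrightarrow> (\<forall>i\<in>I. \<forall>j\<in>I. \<not> E i j)"

definition nb :: "(nat \<Rightarrow> nat \<Rightarrow> bool) \<Rightarrow> nat \<Rightarrow> nat set" where
  "nb E v = {u. E u v \<or> E v u}"

definition qb :: "(nat \<Rightarrow> nat \<Rightarrow> bool) \<Rightarrow> (nat \<Rightarrow> real) \<Rightarrow> nat set \<Rightarrow> real" where
  "qb E p X = (\<Sum>I\<in>{I. I \<subseteq> X \<and> indep E I}. (-1) ^ card I * (\<Prod>i\<in>I. p i))"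

lemma qb_eq: "X \<subseteq> {1..n} \<Longrightarrow> q_breve n E X p = qb E p X"
  unfolding q_breve_def qb_def Ind_def indep_def
  by (rule sum.cong) auto

lemma qb_insert:
  assumes fin: "finite X" and vX: "v \<notin> X" and irr: "\<not> E v v"
  shows "qb E p (insert v X) = qb E p X - p v * qb E p (X - nb E v)"
proof -
  let ?F = "\<lambda>I. (-1::real) ^ card I * (\<Prod>i\<in>I. p i)"
  let ?A = "{I. I \<subseteq> X \<and> indep E I}"
  let ?B = "{J. J \<subseteq> X - nb E v \<and> indep E J}"
  have seteq: "{I. I \<subseteq> insert v X \<and> indep E I} = ?A \<union> insert v ` ?B"
  proof (rule set_eqI, rule iffI)
    fix I assume I: "I \<in> {I. I \<subseteq> insert v X \<and> indep E I}"
    show "I \<in> ?A \<union> insert v ` ?B"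
    proof (cases "v \<in> I")
      case False then show ?thesis using I by auto
    next
      case True
      have "I - {v} \<in> ?B" using I True unfolding indep_def nb_def by auto
      moreover have "I = insert v (I - {v})" using True by auto
      ultimately show ?thesis by blast
    qed
  next
    fix I assume "I \<in> ?A \<union> insert v ` ?B"
    then show "I \<in> {I. I \<subseteq> insert v X \<and> indep E I}"
      using irr unfolding indep_def nb_def by auto
  qed
  have finA: "finite ?A" by (rule finite_subset[of _ "Pow X"]) (use fin in auto)
  have finB: "finite ?B" by (rule finite_subset[of _ "Pow X"]) (use fin in auto)
  have disj: "?A \<inter> insert v ` ?B = {}" using vX by auto
  have inj: "inj_on (insert v) ?B"
    unfolding inj_on_def by (metis (no_types, lifting) Diff_iff Diff_insert_absorb mem_Collect_eq nb_def subset_iff vX)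
  have "qb E p (insert v X) = sum ?F ?A + sum ?F (insert v ` ?B)"
    unfolding qb_def seteq
    by (rule sum.union_disjoint) (use finA finB disj in auto)
  also have "sum ?F (insert v ` ?B) = sum (?F \<circ> insert v) ?B"
    by (rule sum.reindex[OF inj])
  also have "\<dots> = sum (\<lambda>J. - (p v * ?F J)) ?B"
  proof (rule sum.cong)
    fix J assume J: "J \<in> ?B"
    have fJ: "finite J" using J fin finite_subset by blast
    have vJ: "v \<notin> J" using J vX by auto
    show "(?F \<circ> insert v) J = - (p v * ?F J)"
      using fJ vJ by (simp add: card_insert_disjoint prod.insert_remove)
  qed simp
  also have "\<dots> = - (p v * qb E p (X - nb E v))"
    unfolding qb_def by (simp add: sum_negf sum_distrib_left)
  finally show ?thesis unfolding qb_def by simp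
qed

lemma chain_aux:
  fixes a b c d e s :: real
  assumes "0 < c" "0 \<le> s" "0 \<le> b" "a * c \<le> b * d" "d * s \<le> e * c"
  shows "a * s \<le> b * e"
proof -
  have "a * c * s \<le> b * d * s" using assms by (intro mult_right_mono) auto
  also have "\<dots> = b * (d * s)" by simp
  also have "\<dots> \<le> b * (e * c)" using assms by (intro mult_left_mono) auto
  finally have "(a * s) * c \<le> (b * e) * c" by (simp add: algebra_simps)
  then show ?thesis using assms(1) by simp
qed

locale shear =
  fixes n :: nat and E :: "nat \<Rightarrow> nat \<Rightarrow> bool" and p :: "nat \<Rightarrow> real"
  assumes pos: "\<And>X. X \<subseteq> {1..n} \<Longrightarrow> qb E p X > 0"
    and pp: "\<And>v. v \<in> {1..n} \<Longrightarrow> 0 < p v"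
    and irr: "\<And>v. v \<in> {1..n} \<Longrightarrow> \<not> E v v"
begin

lemma mono_aux:
  assumes "finite D"
  shows "S \<union> D \<subseteq> {1..n} \<Longrightarrow> qb E p (S \<union> D) \<le> qb E p S"
  using assms
proof (induction D rule: finite_induct)
  case empty then show ?case by simp
next
  case (insert w D)
  show ?case
  proof (cases "w \<in> S \<union> D")
    case True
    then have "S \<union> insert w D = S \<union> D" by auto
    then show ?thesis using insert by auto
  next
    case False
    have sub: "S \<union> D \<subseteq> {1..n}" using insert by auto
    have fin: "finite (S \<union> D)" using sub finite_subset by blast
    have w: "w \<in> {1..n}" using insert by auto
    have "qb E p (S \<union> insert w D) = qb E p (insert w (S \<union> D))" by simp
    also have "\<dots> = qb E p (S \<union> D) - p w * qb E p (S \<union> D - nb E w)"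
      by (rule qb_insert[where X="S \<union> D" and v=w]) (use fin False irr[OF w] in auto)
    also have "\<dots> \<le> qb E p (S \<union> D)"
    proof -
      have "S \<union> D - nb E w \<subseteq> {1..n}" using sub by blast
      then have "0 < p w * qb E p (S \<union> D - nb E w)" using mult_pos_pos[OF pp[OF w] pos] by blast
      then show ?thesis by simp
    qed
    also have "\<dots> \<le> qb E p S" using insert sub by auto
    finally show ?thesis .
  qed
qed

lemma mono: "S \<subseteq> T \<Longrightarrow> T \<subseteq> {1..n} \<Longrightarrow> qb E p T \<le> qb E p S"
proof -
  assume a: "S \<subseteq> T" "T \<subseteq> {1..n}"
  have "finite (T - S)" using a finite_subset by blast
  moreover have "S \<union> (T - S) = T" using a by auto
  ultimately show ?thesis using mono_aux[of "T - S" S] a by auto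
qed

lemma local_ineq:
  "T \<subseteq> {1..n} \<Longrightarrow> S \<subseteq> T \<Longrightarrow> v \<in> {1..n} \<Longrightarrow> v \<notin> T \<Longrightarrow>
   qb E p (insert v T) * qb E p S \<le> qb E p (insert v S) * qb E p T"
proof (induction "card T" arbitrary: T S v rule: less_induct)
  case less
  note IH = less.hyps
  have finT: "finite T" using less.prems finite_subset by blast
  have step: "qb E p (insert v (insert w S0)) * qb E p S0 \<le> qb E p (insert v S0) * qb E p (insert w S0)"
    if ws: "insert w S0 \<subseteq> T" "w \<notin> S0" for w S0
  proof -
    have S0n: "S0 \<subseteq> {1..n}" using ws less.prems by auto
    have wS0n: "insert w S0 \<subseteq> {1..n}" using ws less.prems by auto
    have fS0: "finite S0" using S0n finite_subset by blast
    have vS0: "v \<notin> S0" "v \<notin> insert w S0" using ws less.prems by auto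
    have vv: "\<not> E v v" using irr less.prems by auto
    define A where "A = qb E p (insert w S0)"
    define B where "B = qb E p (insert w S0 - nb E v)"
    define C where "C = qb E p S0"
    define D where "D = qb E p (S0 - nb E v)"
    have e1: "qb E p (insert v (insert w S0)) = A - p v * B"
      unfolding A_def B_def by (rule qb_insert) (use fS0 vS0 vv in auto)
    have e2: "qb E p (insert v S0) = C - p v * D"
      unfolding C_def D_def by (rule qb_insert) (use fS0 vS0 vv in auto)
    have key: "D * A \<le> B * C"
    proof (cases "w \<in> nb E v")
      case True
      then have "insert w S0 - nb E v = S0 - nb E v" by auto
      then have "B = D" unfolding B_def D_def by simp
      moreover have "A \<le> C" unfolding A_def C_def by (rule mono) (use wS0n in auto)
      moreover have "D > 0" unfolding D_def using pos[of "S0 - nb E v"] S0n by auto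
      ultimately show ?thesis by (metis less_imp_le mult.commute mult_left_mono)
    next
      case False
      then have eq: "insert w S0 - nb E v = insert w (S0 - nb E v)" by auto
      have "S0 \<subset> T" using ws by auto
      then have "card S0 < card T" using finT psubset_card_mono by blast
      moreover have "w \<in> {1..n}" "w \<notin> S0" using wS0n ws by auto
      ultimately have "qb E p (insert w S0) * qb E p (S0 - nb E v) \<le> qb E p (insert w (S0 - nb E v)) * qb E p S0"
        using IH[of S0 "S0 - nb E v" w] S0n by auto
      then show ?thesis unfolding A_def B_def C_def D_def eq by (simp add: mult.commute)
    qed
    have "p v * (D * A) \<le> p v * (B * C)"
      using key pp[of v] less.prems by (intro mult_left_mono) auto
    then have "(A - p v * B) * C \<le> (C - p v * D) * A" by (simp add: algebra_simps)
    then show ?thesis unfolding e1 e2 A_def C_def by (simp add: mult.commute)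
  qed
  have chain: "D \<subseteq> T - S \<longrightarrow> qb E p (insert v (S \<union> D)) * qb E p S \<le> qb E p (insert v S) * qb E p (S \<union> D)"
    if "finite D" for D
    using that
  proof (induction D rule: finite_induct)
    case empty then show ?case by simp
  next
    case (insert w D)
    show ?case
    proof
      assume sub: "insert w D \<subseteq> T - S"
      let ?S0 = "S \<union> D"
      have wS0: "w \<notin> ?S0" using sub insert by auto
      have ins: "insert w ?S0 \<subseteq> T" using sub less.prems by auto
      have st: "qb E p (insert v (insert w ?S0)) * qb E p ?S0 \<le> qb E p (insert w ?S0) * qb E p (insert v ?S0)"
        using step[OF ins wS0] by (simp add: mult.commute)
      have ih: "qb E p (insert v ?S0) * qb E p S \<le> qb E p (insert v S) * qb E p ?S0"
        using insert sub by auto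
      have S0n: "?S0 \<subseteq> {1..n}" using sub less.prems by auto
      have wS0n: "insert w ?S0 \<subseteq> {1..n}" using ins less.prems by auto
      have Sn: "S \<subseteq> {1..n}" using less.prems by auto
      have "qb E p (insert v (insert w ?S0)) * qb E p S \<le> qb E p (insert w ?S0) * qb E p (insert v S)"
        by (rule chain_aux[OF _ _ _ st ih]) (use pos S0n wS0n Sn in \<open>auto simp: less_imp_le\<close>)
      then show "qb E p (insert v (S \<union> insert w D)) * qb E p S \<le> qb E p (insert v S) * qb E p (S \<union> insert w D)"
        by (simp add: mult.commute)
    qed
  qed
  have "finite (T - S)" using finT by auto
  moreover have "S \<union> (T - S) = T" using less.prems by auto
  ultimately show ?case using chain[of "T - S"] by auto
qed

lemma gen_aux:
  assumes "finite D"
  shows "D \<inter> X = {} \<Longrightarrow> D \<subseteq> {1..n} \<Longrightarrow> C \<subseteq> X \<Longrightarrow> X \<subseteq> {1..n} \<Longrightarrow>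
    qb E p (X \<union> D) * qb E p C \<le> qb E p X * qb E p (C \<union> D)"
  using assms
proof (induction D rule: finite_induct)
  case empty then show ?case by simp
next
  case (insert v D)
  have XD: "X \<union> D \<subseteq> {1..n}" "C \<union> D \<subseteq> {1..n}" using insert.prems by auto
  have vn: "v \<in> {1..n}" "v \<notin> X \<union> D" using insert by auto
  have L: "qb E p (insert v (X \<union> D)) * qb E p (C \<union> D) \<le> qb E p (insert v (C \<union> D)) * qb E p (X \<union> D)"
    by (rule local_ineq) (use XD vn insert.prems in auto)
  have ih: "qb E p (X \<union> D) * qb E p C \<le> qb E p X * qb E p (C \<union> D)"
    using insert by auto
  have "qb E p (insert v (X \<union> D)) * qb E p C \<le> qb E p (insert v (C \<union> D)) * qb E p X"
    by (rule chain_aux[OF _ _ _ L]) (use pos XD insert.prems ih in \<open>auto simp: less_imp_le mult.commute\<close>)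
  then show ?case by (simp add: mult.commute)
qed

lemma gen: "X \<subseteq> {1..n} \<Longrightarrow> Y \<subseteq> {1..n} \<Longrightarrow> qb E p (X \<union> Y) * qb E p (X \<inter> Y) \<le> qb E p X * qb E p Y"
proof -
  assume a: "X \<subseteq> {1..n}" "Y \<subseteq> {1..n}"
  have "finite (Y - X)" using a finite_subset by blast
  moreover have "X \<union> (Y - X) = X \<union> Y" "(X \<inter> Y) \<union> (Y - X) = Y" by auto
  ultimately show ?thesis using gen_aux[of "Y - X" X "X \<inter> Y"] a by auto
qed

end

definition U :: "nat \<Rightarrow> (nat \<Rightarrow> nat \<Rightarrow> bool) \<Rightarrow> nat set \<Rightarrow> nat set" where
  "U n E S = {1..n} - S - (\<Union>s\<in>S. nb E s)"

lemma q_ind: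
  assumes S: "S \<in> Ind n E"
  shows "q n E S p = (\<Prod>i\<in>S. p i) * qb E p (U n E S)"
proof -
  let ?F = "\<lambda>I. (-1::real) ^ card (I - S) * (\<Prod>i\<in>I. p i)"
  let ?B = "{J. J \<subseteq> U n E S \<and> indep E J}"
  have Sn: "S \<subseteq> {1..n}" and Si: "indep E S" using S unfolding Ind_def indep_def by auto
  have finS: "finite S" using Sn finite_subset by blast
  have seteq: "{I\<in>Ind n E. S \<subseteq> I} = (\<lambda>J. S \<union> J) ` ?B"
  proof (rule set_eqI, rule iffI)
    fix I assume I: "I \<in> {I\<in>Ind n E. S \<subseteq> I}"
    have "I - S \<in> ?B" using I unfolding Ind_def indep_def U_def nb_def by auto
    moreover have "I = S \<union> (I - S)" using I by auto
    ultimately show "I \<in> (\<lambda>J. S \<union> J) ` ?B" by blast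
  next
    fix I assume "I \<in> (\<lambda>J. S \<union> J) ` ?B"
    then obtain J where J: "J \<in> ?B" "I = S \<union> J" by blast
    show "I \<in> {I\<in>Ind n E. S \<subseteq> I}"
      using J Sn Si unfolding Ind_def indep_def U_def nb_def by auto
  qed
  have inj: "inj_on (\<lambda>J. S \<union> J) ?B"
  proof (rule inj_onI)
    fix J J' assume "J \<in> ?B" "J' \<in> ?B" "S \<union> J = S \<union> J'"
    then show "J = J'" unfolding U_def by blast
  qed
  have "q n E S p = sum ?F ((\<lambda>J. S \<union> J) ` ?B)" unfolding q_def seteq by simp
  also have "\<dots> = sum (?F \<circ> (\<lambda>J. S \<union> J)) ?B" by (rule sum.reindex[OF inj])
  also have "\<dots> = sum (\<lambda>J. (\<Prod>i\<in>S. p i) * ((-1) ^ card J * (\<Prod>i\<in>J. p i))) ?B"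
  proof (rule sum.cong)
    fix J assume J: "J \<in> ?B"
    have fJ: "finite J" using J finite_subset[of J "{1..n}"] unfolding U_def by auto
    have dj: "S \<inter> J = {}" using J unfolding U_def by auto
    have "S \<union> J - S = J" using dj by auto
    then show "(?F \<circ> (\<lambda>J. S \<union> J)) J = (\<Prod>i\<in>S. p i) * ((-1) ^ card J * (\<Prod>i\<in>J. p i))"
      using prod.union_disjoint[OF finS fJ dj, of p] by simp
  qed simp
  also have "\<dots> = (\<Prod>i\<in>S. p i) * qb E p (U n E S)"
    unfolding qb_def by (simp add: sum_distrib_left)
  finally show ?thesis .
qed

lemma q_nonind: "S \<notin> Ind n E \<Longrightarrow> q n E S p = 0"
proof -
  assume S: "S \<notin> Ind n E"
  have e: "{I\<in>Ind n E. S \<subseteq> I} = {}" using S unfolding Ind_def by blast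
  show ?thesis unfolding q_def e by simp
qed

theorem mainTheorem11:
  fixes n :: nat and E :: "nat \<Rightarrow> nat \<Rightarrow> bool" and p :: "nat \<Rightarrow> real"
    and A B :: "nat set"
  assumes "is_graph n E"
    and "p \<in> shearer_region n E"
    and "A \<subseteq> {1..n}" and "B \<subseteq> {1..n}"
  shows "q n E A p * q n E B p \<ge> q n E (A \<union> B) p * q n E (A \<inter> B) p"
proof -
  interpret shear n E p
  proof
    fix X assume "X \<subseteq> {1..n}"
    then show "qb E p X > 0" using assms(2) qb_eq[of X n E p] unfolding shearer_region_def by auto
  next
    fix v assume "v \<in> {1..n}" then show "0 < p v" using assms(2) unfolding shearer_region_def by auto
  next
    fix v assume "v \<in> {1..n}" then show "\<not> E v v" using assms(1) unfolding is_graph_def by auto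
  qed
  have prodpos: "0 \<le> (\<Prod>i\<in>S. p i)" if "S \<subseteq> {1..n}" for S
    using that pp by (intro prod_nonneg) (auto simp: less_imp_le)
  have Usub: "U n E S \<subseteq> {1..n}" for S unfolding U_def by auto
  have qnn: "0 \<le> q n E S p" if "S \<subseteq> {1..n}" for S
  proof (cases "S \<in> Ind n E")
    case True
    then show ?thesis using q_ind[OF True] prodpos[OF that] pos[OF Usub[of S]] by simp
  next
    case False then show ?thesis using q_nonind by simp
  qed
  show ?thesis
  proof (cases "A \<union> B \<in> Ind n E")
    case False
    then show ?thesis using q_nonind[OF False] qnn assms(3,4) by simp
  next
    case True
    have iA: "A \<in> Ind n E" and iB: "B \<in> Ind n E" and iAB: "A \<inter> B \<in> Ind n E"
      using True unfolding Ind_def by auto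
    have U1: "U n E (A \<union> B) = U n E A \<inter> U n E B" unfolding U_def by auto
    have U2: "U n E A \<union> U n E B \<subseteq> U n E (A \<inter> B)" unfolding U_def by auto
    have finA: "finite A" "finite B" using assms(3,4) finite_subset by blast+
    have pr: "(\<Prod>i\<in>A \<union> B. p i) * (\<Prod>i\<in>A \<inter> B. p i) = (\<Prod>i\<in>A. p i) * (\<Prod>i\<in>B. p i)"
      by (rule prod.union_inter[OF finA])
    have g: "qb E p (U n E A \<union> U n E B) * qb E p (U n E A \<inter> U n E B) \<le> qb E p (U n E A) * qb E p (U n E B)"
      by (rule gen[OF Usub Usub])
    have m: "qb E p (U n E (A \<inter> B)) \<le> qb E p (U n E A \<union> U n E B)"
      by (rule mono[OF U2]) (use Usub in auto)
    have pI: "0 < qb E p (U n E A \<inter> U n E B)" using pos[of "U n E A \<inter> U n E B"] Usub[of A] by auto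
    have qq: "qb E p (U n E (A \<union> B)) * qb E p (U n E (A \<inter> B)) \<le> qb E p (U n E A) * qb E p (U n E B)"
    proof -
      have h1: "qb E p (U n E (A \<inter> B)) * qb E p (U n E A \<inter> U n E B) \<le> qb E p (U n E A \<union> U n E B) * qb E p (U n E A \<inter> U n E B)"
        using m pI by (intro mult_right_mono) auto
      have "qb E p (U n E (A \<inter> B)) * qb E p (U n E A \<inter> U n E B) \<le> qb E p (U n E A) * qb E p (U n E B)"
        using order_trans[OF h1 g] .
      then show ?thesis by (simp add: U1 ac_simps)
    qed
    have pAB: "0 \<le> (\<Prod>i\<in>A. p i) * (\<Prod>i\<in>B. p i)" using prodpos assms(3,4) by simp
    have "q n E (A \<union> B) p * q n E (A \<inter> B) p
        = ((\<Prod>i\<in>A. p i) * (\<Prod>i\<in>B. p i)) * (qb E p (U n E (A \<union> B)) * qb E p (U n E (A \<inter> B)))"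
      using q_ind[OF True] q_ind[OF iAB] pr by (simp add: algebra_simps)
    also have "\<dots> \<le> ((\<Prod>i\<in>A. p i) * (\<Prod>i\<in>B. p i)) * (qb E p (U n E A) * qb E p (U n E B))"
      by (rule mult_left_mono[OF qq pAB])
    also have "\<dots> = q n E A p * q n E B p"
      using q_ind[OF iA] q_ind[OF iB] by (simp add: algebra_simps)
    finally show ?thesis .
  qed
qed

end
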